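(* Let $\{X_t\}_{t\in\mathbb N^+}$ be a real-valued process adapted to a filtration $\{\mathcal F_t\}_{t\in\mathbb N}$ with $\mathcal F_0$ trivial, such that for all $t\in\mathbb N^+$, $\mathbb E[X_t\mid\mathcal F_{t-1}]=\mu$ (a constant) and $\mathbb E[(X_t-\mu)^2\mid\mathcal F_{t-1}]\le\sigma^2$. Let $\alpha\in(0,1)$, let $\phi$ be a Catoni-type influence function, and let $\{\lambda_t\}_{t\in\mathbb N^+}$ be nonrandom positive numbers. Define $$\mathrm{CI}^{\mathsf C}_t=\left\{m\in\mathbb R:\ -\frac{\sigma^2\sum_{i=1}^t\lambda_i^2}{2}-\log(2/\alpha)\le\sum_{i=1}^t\phi(\lambda_i(X_i-m))\le\frac{\sigma^2\sum_{i=1}^t\lambda_i^2}{2}+\log(2/\alpha)\right\},$$ and let $|\mathrm{CI}^{\mathsf C}_t|$ denote its width (supremum minus infimum). Let $0<\varepsilon<1$ and $t\in\mathbb N^+$ be such that $$\left(\sum_{i=1}^t\lambda_i\right)^2-2\left(\sum_{i=1}^t\lambda_i^2\right)\left(\sigma^2\sum_{i=1}^t\lambda_i^2+\log(2/\varepsilon)+\log(2/\alpha)\right)\ge0.$$ Then, with probability at least $1-\varepsilon$, $$|\mathrm{CI}^{\mathsf C}_t|\le\frac{4\left(\sigma^2\sum_{i=1}^t\lambda_i^2+\log(2/\varepsilon)+\log(2/\alpha)\right)}{\sum_{i=1}^t\lambda_i}.$$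
   Context: A function $\phi:\mathbb R\to\mathbb R$ is a Catoni-type influence function if it is increasing and $-\log(1-x+x^2/2)\le\phi(x)\le\log(1+x+x^2/2)$ for all $x\in\mathbb R$. *)

theory Defs
  imports "HOL-Probability.Probability"
begin

definition catoni_type :: "(real \<Rightarrow> real) \<Rightarrow> bool" where
  "catoni_type \<phi> \<longleftrightarrow> mono \<phi> \<and>
     (\<forall>x. - ln (1 - x + x\<^sup>2 / 2) \<le> \<phi> x \<and> \<phi> x \<le> ln (1 + x + x\<^sup>2 / 2))"

definition catoni_CI ::
  "(real \<Rightarrow> real) \<Rightarrow> (nat \<Rightarrow> real) \<Rightarrow> real \<Rightarrow> real \<Rightarrow> (nat \<Rightarrow> 'a \<Rightarrow> real) \<Rightarrow> nat \<Rightarrow> 'a \<Rightarrow> real set"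
  where
  "catoni_CI \<phi> lam \<sigma> \<alpha> X t \<omega> =
     {m. - (\<sigma>\<^sup>2 * (\<Sum>i=1..t. (lam i)\<^sup>2)) / 2 - ln (2 / \<alpha>)
            \<le> (\<Sum>i=1..t. \<phi> (lam i * (X i \<omega> - m))) \<and>
         (\<Sum>i=1..t. \<phi> (lam i * (X i \<omega> - m)))
            \<le> (\<sigma>\<^sup>2 * (\<Sum>i=1..t. (lam i)\<^sup>2)) / 2 + ln (2 / \<alpha>)}"

definition set_width :: "real set \<Rightarrow> real" where
  "set_width S = (if S = {} then 0 else Sup S - Inf S)"

end

theory Submission
  imports Defs
begin

lemma nn_real_cond_exp:
  assumes "sigma_finite_subalgebra M G" "integrable M f" "\<And>x. f x \<ge> 0"
  shows "AE x in M. nn_cond_exp M G (\<lambda>x. ennreal (f x)) x = ennreal (real_cond_exp M G f x)"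
proof -
  interpret sigma_finite_subalgebra M G by fact
  have fm[measurable]: "f \<in> borel_measurable M" using assms(2) by auto
  have z: "(\<lambda>x. ennreal (- f x)) = (\<lambda>x. 0)" using assms(3) by (simp add: ennreal_neg)
  have "AE x in M. (\<lambda>x. 0) x = nn_cond_exp M G (\<lambda>x. 0) x"
    by (rule nn_cond_exp_F_meas) auto
  then have A1: "AE x in M. nn_cond_exp M G (\<lambda>x. ennreal (- f x)) x = 0" unfolding z by auto
  have "(\<integral>\<^sup>+ x. nn_cond_exp M G (\<lambda>x. ennreal (f x)) x \<partial>M) = (\<integral>\<^sup>+ x. ennreal (f x) \<partial>M)"
    using nn_cond_exp_intg[of "\<lambda>_. 1" "\<lambda>x. ennreal (f x)"] by simp
  also have "\<dots> < \<infinity>" using assms(2,3) by (simp add: integrable_iff_bounded abs_of_nonneg)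
  finally have A2: "AE x in M. nn_cond_exp M G (\<lambda>x. ennreal (f x)) x \<noteq> \<infinity>"
    by (intro nn_integral_PInf_AE) auto
  show ?thesis using A1 A2
    by eventually_elim (auto simp: real_cond_exp_def less_top)
qed

lemma one_step:
  assumes sfs: "sigma_finite_subalgebra M G" and ps: "prob_space M"
  and Zm[measurable]: "Z \<in> borel_measurable G"
  and Ym[measurable]: "Y \<in> borel_measurable M" and Yi: "integrable M Y"
  and mu: "AE x in M. real_cond_exp M G Y x = \<mu>"
  and var: "AE x in M. nn_cond_exp M G (\<lambda>x. ennreal ((Y x - \<mu>)\<^sup>2)) x \<le> ennreal (\<sigma>\<^sup>2)"
  and Wm[measurable]: "W \<in> borel_measurable M"
  and Wb: "\<And>x. x \<in> space M \<Longrightarrow> W x \<le> ennreal (1 + a*(Y x - m) + a\<^sup>2*(Y x - m)\<^sup>2/2)"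
  shows "(\<integral>\<^sup>+x. Z x * W x \<partial>M) \<le> ennreal (1 + a*(\<mu>-m) + a\<^sup>2*((\<mu>-m)\<^sup>2 + \<sigma>\<^sup>2)/2) * (\<integral>\<^sup>+x. Z x \<partial>M)"
proof -
  interpret sigma_finite_subalgebra M G by fact
  interpret P: prob_space M by fact
  define d where "d = \<mu> - m"
  define c0 where "c0 = 1 + a*d + a\<^sup>2*d\<^sup>2/2"
  define c1 where "c1 = a + a\<^sup>2*d"
  define c2 where "c2 = a\<^sup>2/2"
  define V where "V = (\<lambda>x. Y x - \<mu>)"
  define g where "g = 1 + a*(\<mu>-m) + a\<^sup>2*((\<mu>-m)\<^sup>2 + \<sigma>\<^sup>2)/2"
  have gc: "g = c0 + c2 * \<sigma>\<^sup>2" unfolding g_def c0_def c2_def d_def by (simp add: algebra_simps)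
  have c2pos: "c2 \<ge> 0" unfolding c2_def by simp
  have [measurable]: "V \<in> borel_measurable M" unfolding V_def by measurable
  have Vi: "integrable M V" unfolding V_def using Yi by auto
  have "(\<integral>\<^sup>+ x. ennreal ((V x)\<^sup>2) \<partial>M) = (\<integral>\<^sup>+ x. nn_cond_exp M G (\<lambda>x. ennreal ((V x)\<^sup>2)) x \<partial>M)"
    using nn_cond_exp_intg[of "\<lambda>_. 1" "\<lambda>x. ennreal ((V x)\<^sup>2)"] by simp
  also have "\<dots> \<le> (\<integral>\<^sup>+ x. ennreal (\<sigma>\<^sup>2) \<partial>M)"
    by (rule nn_integral_mono_AE) (use var in \<open>simp add: V_def\<close>)
  also have "\<dots> = ennreal (\<sigma>\<^sup>2)" by (simp add: P.emeasure_space_1)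
  also have "\<dots> < \<infinity>" by simp
  finally have V2i: "integrable M (\<lambda>x. (V x)\<^sup>2)"
    by (intro integrableI_nonneg) auto
  have hYi: "integrable M (\<lambda>x. c0 + c1 * V x + c2 * (V x)\<^sup>2)"
    using Vi V2i by auto
  have hpos: "c0 + c1 * V x + c2 * (V x)\<^sup>2 \<ge> 0" for x
  proof -
    have "c0 + c1 * V x + c2 * (V x)\<^sup>2 = ((1 + a*(V x + d))\<^sup>2 + 1)/2"
      unfolding c0_def c1_def c2_def by (simp add: algebra_simps power2_eq_square)
    also have "\<dots> \<ge> 0" by simp
    finally show ?thesis .
  qed
  have e1: "AE x in M. real_cond_exp M G (\<lambda>x. (c0 + c1 * V x) + c2 * (V x)\<^sup>2) x
      = real_cond_exp M G (\<lambda>x. c0 + c1 * V x) x + real_cond_exp M G (\<lambda>x. c2 * (V x)\<^sup>2) x"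
    by (rule real_cond_exp_add) (use Vi V2i in auto)
  have e2: "AE x in M. real_cond_exp M G (\<lambda>x. c0 + c1 * V x) x
      = real_cond_exp M G (\<lambda>x. c0) x + real_cond_exp M G (\<lambda>x. c1 * V x) x"
    by (rule real_cond_exp_add) (use Vi in auto)
  have e3: "AE x in M. real_cond_exp M G (\<lambda>x. c0) x = c0"
    by (rule real_cond_exp_F_meas) auto
  have e4: "AE x in M. real_cond_exp M G (\<lambda>x. c1 * V x) x = c1 * real_cond_exp M G V x"
    by (rule real_cond_exp_cmult) (rule Vi)
  have e5: "AE x in M. real_cond_exp M G (\<lambda>x. c2 * (V x)\<^sup>2) x = c2 * real_cond_exp M G (\<lambda>x. (V x)\<^sup>2) x"
    by (rule real_cond_exp_cmult) (rule V2i)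
  have e6: "AE x in M. real_cond_exp M G V x = real_cond_exp M G Y x - real_cond_exp M G (\<lambda>x. \<mu>) x"
    unfolding V_def by (rule real_cond_exp_diff) (use Yi in auto)
  have e7: "AE x in M. real_cond_exp M G (\<lambda>x. \<mu>) x = \<mu>"
    by (rule real_cond_exp_F_meas) auto
  have e8: "AE x in M. nn_cond_exp M G (\<lambda>x. ennreal ((V x)\<^sup>2)) x = ennreal (real_cond_exp M G (\<lambda>x. (V x)\<^sup>2) x)"
    by (rule nn_real_cond_exp[OF sfs V2i]) simp
  have e9: "AE x in M. nn_cond_exp M G (\<lambda>x. ennreal (c0 + c1 * V x + c2 * (V x)\<^sup>2)) x
      = ennreal (real_cond_exp M G (\<lambda>x. c0 + c1 * V x + c2 * (V x)\<^sup>2) x)"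
    by (rule nn_real_cond_exp[OF sfs hYi hpos])
  have key: "AE x in M. nn_cond_exp M G (\<lambda>x. ennreal (c0 + c1 * V x + c2 * (V x)\<^sup>2)) x \<le> ennreal g"
    using e1 e2 e3 e4 e5 e6 e7 e8 e9 mu var
  proof eventually_elim
    case (elim x)
    have "ennreal (real_cond_exp M G (\<lambda>x. (V x)\<^sup>2) x) \<le> ennreal (\<sigma>\<^sup>2)"
      using elim by (simp add: V_def)
    then have "real_cond_exp M G (\<lambda>x. (V x)\<^sup>2) x \<le> \<sigma>\<^sup>2"
      by (simp add: ennreal_le_iff)
    then have "c2 * real_cond_exp M G (\<lambda>x. (V x)\<^sup>2) x \<le> c2 * \<sigma>\<^sup>2"
      using c2pos by (simp add: mult_left_mono)
    then have "real_cond_exp M G (\<lambda>x. c0 + c1 * V x + c2 * (V x)\<^sup>2) x \<le> g"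
      using elim gc by simp
    then show ?case using elim(9) by (simp add: ennreal_leI)
  qed
  have "(\<integral>\<^sup>+x. Z x * W x \<partial>M) \<le> (\<integral>\<^sup>+x. Z x * ennreal (c0 + c1 * V x + c2 * (V x)\<^sup>2) \<partial>M)"
  proof (rule nn_integral_mono)
    fix x assume x: "x \<in> space M"
    have "1 + a*(Y x - m) + a\<^sup>2*(Y x - m)\<^sup>2/2 = c0 + c1 * V x + c2 * (V x)\<^sup>2"
      unfolding c0_def c1_def c2_def V_def d_def by (simp add: field_simps power2_eq_square)
    then show "Z x * W x \<le> Z x * ennreal (c0 + c1 * V x + c2 * (V x)\<^sup>2)"
      using Wb[OF x] by (simp add: mult_left_mono)
  qed
  also have "\<dots> = (\<integral>\<^sup>+x. Z x * nn_cond_exp M G (\<lambda>x. ennreal (c0 + c1 * V x + c2 * (V x)\<^sup>2)) x \<partial>M)"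
    by (rule nn_cond_exp_intg[symmetric]) auto
  also have "\<dots> \<le> (\<integral>\<^sup>+x. Z x * ennreal g \<partial>M)"
    by (rule nn_integral_mono_AE, rule AE_mp[OF key]) (auto intro!: AE_I2 mult_left_mono)
  also have "\<dots> = ennreal g * (\<integral>\<^sup>+x. Z x \<partial>M)"
    using measurable_from_subalg[OF subalg Zm]
    by (subst nn_integral_cmult[symmetric]) (auto simp: mult.commute)
  finally show ?thesis unfolding g_def .
qed

lemma phi_exp_bound:
  assumes "catoni_type \<phi>" "s = 1 \<or> s = -1"
  shows "exp (s * \<phi> x) \<le> 1 + s * x + x\<^sup>2/2"
proof -
  have pos: "1 + s * x + x\<^sup>2/2 > 0"
  proof -
    have "1 + s * x + x\<^sup>2/2 = ((1 + s*x)\<^sup>2 + 1)/2" using assms(2)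
      by (auto simp: power2_eq_square field_simps)
    also have "\<dots> > 0" by (simp add: add_nonneg_pos)
    finally show ?thesis .
  qed
  have b: "- ln (1 - x + x\<^sup>2/2) \<le> \<phi> x \<and> \<phi> x \<le> ln (1 + x + x\<^sup>2/2)"
    using assms(1) unfolding catoni_type_def by blast
  have "s * \<phi> x \<le> ln (1 + s * x + x\<^sup>2/2)"
  proof (cases "s = 1")
    case True then show ?thesis using b by simp
  next
    case False
    then have "s = -1" using assms(2) by auto
    then have "1 + s * x + x\<^sup>2/2 = 1 - x + x\<^sup>2/2" by simp
    then show ?thesis using b \<open>s = -1\<close> by simp
  qed
  then have "exp (s * \<phi> x) \<le> exp (ln (1 + s * x + x\<^sup>2/2))" by simp
  also have "\<dots> = 1 + s * x + x\<^sup>2/2" using pos by simp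
  finally show ?thesis .
qed

lemma sfs_of:
  assumes "prob_space M" "subalgebra M G"
  shows "sigma_finite_subalgebra M G"
proof -
  interpret prob_space M by fact
  have "finite_measure_subalgebra M G"
    by (intro finite_measure_subalgebra.intro finite_measure_subalgebra_axioms.intro) (use assms in auto)
  then show ?thesis by (rule finite_measure_subalgebra_is_sigma_finite)
qed

lemma prod_bound:
  fixes M :: "'a measure" and F :: "nat \<Rightarrow> 'a measure" and X :: "nat \<Rightarrow> 'a \<Rightarrow> real"
  assumes ps: "prob_space M"
    and filt: "filtration (space M) F"
    and sub: "\<And>n. subalgebra M (F n)"
    and Xm: "\<And>n. n \<ge> 1 \<Longrightarrow> X n \<in> borel_measurable (F n)"
    and Xi: "\<And>n. n \<ge> 1 \<Longrightarrow> integrable M (X n)"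
    and mu: "\<And>n. n \<ge> 1 \<Longrightarrow> AE \<omega> in M. real_cond_exp M (F (n - 1)) (X n) \<omega> = \<mu>"
    and var: "\<And>n. n \<ge> 1 \<Longrightarrow>
           AE \<omega> in M. nn_cond_exp M (F (n - 1)) (\<lambda>\<omega>. ennreal ((X n \<omega> - \<mu>)\<^sup>2)) \<omega> \<le> ennreal (\<sigma>\<^sup>2)"
    and cat: "catoni_type \<phi>"
    and s: "s = 1 \<or> s = -1"
  shows "(\<integral>\<^sup>+\<omega>. ennreal (exp (\<Sum>i=1..n. s * \<phi> (lam i * (X i \<omega> - m)))) \<partial>M)
     \<le> ennreal (\<Prod>i=1..n. (1 + (s * lam i)*(\<mu>-m) + (s * lam i)\<^sup>2*((\<mu>-m)\<^sup>2 + \<sigma>\<^sup>2)/2))"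
proof (induction n)
  case 0
  interpret prob_space M by fact
  show ?case by (simp add: emeasure_space_1)
next
  case (Suc n)
  interpret prob_space M by fact
  have phim[measurable]: "\<phi> \<in> borel_measurable borel"
    using cat unfolding catoni_type_def by (auto intro: borel_measurable_mono)
  have XFn: "X i \<in> borel_measurable (F n)" if "1 \<le> i" "i \<le> n" for i
  proof -
    have "subalgebra (F n) (F i)" unfolding subalgebra_def
      using filtration.space_F[OF filt] filtration.sets_F_mono[OF filt, of i n] that by auto
    then show ?thesis using measurable_from_subalg Xm that by blast
  qed
  have Zm: "(\<lambda>\<omega>. ennreal (exp (\<Sum>i=1..n. s * \<phi> (lam i * (X i \<omega> - m))))) \<in> borel_measurable (F n)"
  proof -
    have "(\<lambda>\<omega>. (\<Sum>i=1..n. s * \<phi> (lam i * (X i \<omega> - m)))) \<in> borel_measurable (F n)"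
    proof (rule borel_measurable_sum)
      fix i assume "i \<in> {1..n}"
      then have [measurable]: "X i \<in> borel_measurable (F n)" using XFn by auto
      show "(\<lambda>\<omega>. s * \<phi> (lam i * (X i \<omega> - m))) \<in> borel_measurable (F n)" by measurable
    qed
    then show ?thesis by measurable
  qed
  have Ym[measurable]: "X (Suc n) \<in> borel_measurable M"
    using measurable_from_subalg[OF sub Xm[of "Suc n"]] by simp
  define a where "a = s * lam (Suc n)"
  have st: "(\<integral>\<^sup>+\<omega>. ennreal (exp (\<Sum>i=1..n. s * \<phi> (lam i * (X i \<omega> - m)))) *
                 ennreal (exp (s * \<phi> (lam (Suc n) * (X (Suc n) \<omega> - m)))) \<partial>M)
     \<le> ennreal (1 + a*(\<mu>-m) + a\<^sup>2*((\<mu>-m)\<^sup>2 + \<sigma>\<^sup>2)/2) *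
        (\<integral>\<^sup>+\<omega>. ennreal (exp (\<Sum>i=1..n. s * \<phi> (lam i * (X i \<omega> - m)))) \<partial>M)"
  proof (rule one_step[OF sfs_of[OF ps sub] ps Zm Ym Xi])
    show "AE x in M. real_cond_exp M (F n) (X (Suc n)) x = \<mu>" using mu[of "Suc n"] by simp
    show "AE x in M. nn_cond_exp M (F n) (\<lambda>x. ennreal ((X (Suc n) x - \<mu>)\<^sup>2)) x \<le> ennreal (\<sigma>\<^sup>2)"
      using var[of "Suc n"] by simp
    show "(\<lambda>\<omega>. ennreal (exp (s * \<phi> (lam (Suc n) * (X (Suc n) \<omega> - m))))) \<in> borel_measurable M"
      by measurable
    fix x
    have "exp (s * \<phi> (lam (Suc n) * (X (Suc n) x - m))) \<le>
       1 + s * (lam (Suc n) * (X (Suc n) x - m)) + (lam (Suc n) * (X (Suc n) x - m))\<^sup>2/2"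
      by (rule phi_exp_bound[OF cat s])
    also have "\<dots> = 1 + a * (X (Suc n) x - m) + a\<^sup>2 * (X (Suc n) x - m)\<^sup>2 / 2"
      unfolding a_def using s by (auto simp: power_mult_distrib)
    finally show "ennreal (exp (s * \<phi> (lam (Suc n) * (X (Suc n) x - m))))
       \<le> ennreal (1 + a * (X (Suc n) x - m) + a\<^sup>2 * (X (Suc n) x - m)\<^sup>2 / 2)"
      by (rule ennreal_leI)
  qed (auto)
  have gpos: "0 \<le> 1 + b*(\<mu>-m) + b\<^sup>2*((\<mu>-m)\<^sup>2 + \<sigma>\<^sup>2)/2" for b
  proof -
    have "1 + b*(\<mu>-m) + b\<^sup>2*((\<mu>-m)\<^sup>2 + \<sigma>\<^sup>2)/2 = ((1 + b*(\<mu>-m))\<^sup>2 + 1 + b\<^sup>2*\<sigma>\<^sup>2)/2"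
      by (simp add: power2_eq_square field_simps)
    also have "\<dots> \<ge> 0" by (intro divide_nonneg_pos add_nonneg_nonneg) auto
    finally show ?thesis .
  qed
  have ins: "{1..Suc n} = insert (Suc n) {1..n}" by auto
  have "(\<integral>\<^sup>+\<omega>. ennreal (exp (\<Sum>i=1..Suc n. s * \<phi> (lam i * (X i \<omega> - m)))) \<partial>M)
     = (\<integral>\<^sup>+\<omega>. ennreal (exp (\<Sum>i=1..n. s * \<phi> (lam i * (X i \<omega> - m)))) *
                 ennreal (exp (s * \<phi> (lam (Suc n) * (X (Suc n) \<omega> - m)))) \<partial>M)"
    by (simp add: ins exp_add ennreal_mult' mult.commute)
  also have "\<dots> \<le> ennreal (1 + a*(\<mu>-m) + a\<^sup>2*((\<mu>-m)\<^sup>2 + \<sigma>\<^sup>2)/2) *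
       ennreal (\<Prod>i=1..n. (1 + (s * lam i)*(\<mu>-m) + (s * lam i)\<^sup>2*((\<mu>-m)\<^sup>2 + \<sigma>\<^sup>2)/2))"
    using st Suc.IH by (meson mult_left_mono order.trans zero_le)
  also have "\<dots> = ennreal (\<Prod>i=1..Suc n. (1 + (s * lam i)*(\<mu>-m) + (s * lam i)\<^sup>2*((\<mu>-m)\<^sup>2 + \<sigma>\<^sup>2)/2))"
  proof -
    have P0: "0 \<le> (\<Prod>i=1..n. (1 + (s * lam i)*(\<mu>-m) + (s * lam i)\<^sup>2*((\<mu>-m)\<^sup>2 + \<sigma>\<^sup>2)/2))"
      by (rule prod_nonneg) (use gpos in auto)
    show ?thesis
      by (subst ennreal_mult[symmetric, OF gpos P0]) (simp add: ins a_def mult.commute)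
  qed
  finally show ?case .
qed

lemma tail_bound:
  fixes M :: "'a measure" and F :: "nat \<Rightarrow> 'a measure" and X :: "nat \<Rightarrow> 'a \<Rightarrow> real"
  assumes ps: "prob_space M"
    and filt: "filtration (space M) F"
    and sub: "\<And>n. subalgebra M (F n)"
    and Xm: "\<And>n. n \<ge> 1 \<Longrightarrow> X n \<in> borel_measurable (F n)"
    and Xi: "\<And>n. n \<ge> 1 \<Longrightarrow> integrable M (X n)"
    and mu: "\<And>n. n \<ge> 1 \<Longrightarrow> AE \<omega> in M. real_cond_exp M (F (n - 1)) (X n) \<omega> = \<mu>"
    and var: "\<And>n. n \<ge> 1 \<Longrightarrow>
           AE \<omega> in M. nn_cond_exp M (F (n - 1)) (\<lambda>\<omega>. ennreal ((X n \<omega> - \<mu>)\<^sup>2)) \<omega> \<le> ennreal (\<sigma>\<^sup>2)"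
    and cat: "catoni_type \<phi>"
    and s: "s = 1 \<or> s = -1"
    and eps: "0 < \<epsilon>"
  shows "emeasure M {\<omega>\<in>space M. s*(\<mu>-m)*(\<Sum>i=1..t. lam i) + ((\<mu>-m)\<^sup>2+\<sigma>\<^sup>2)*(\<Sum>i=1..t. (lam i)\<^sup>2)/2 + ln (2/\<epsilon>)
      \<le> (\<Sum>i=1..t. s * \<phi> (lam i * (X i \<omega> - m)))} \<le> ennreal (\<epsilon>/2)"
proof -
  interpret prob_space M by fact
  define d where "d = \<mu> - m"
  define R where "R = (\<lambda>\<omega>. (\<Sum>i=1..t. s * \<phi> (lam i * (X i \<omega> - m))))"
  define K where "K = s*d*(\<Sum>i=1..t. lam i) + (d\<^sup>2+\<sigma>\<^sup>2)*(\<Sum>i=1..t. (lam i)\<^sup>2)/2"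
  define a where "a = K + ln (2/\<epsilon>)"
  have phim[measurable]: "\<phi> \<in> borel_measurable borel"
    using cat unfolding catoni_type_def by (auto intro: borel_measurable_mono)
  have Rm[measurable]: "R \<in> borel_measurable M" unfolding R_def
  proof (rule borel_measurable_sum)
    fix i assume "i \<in> {1..t}"
    then have [measurable]: "X i \<in> borel_measurable M" using measurable_from_subalg[OF sub Xm] by auto
    show "(\<lambda>\<omega>. s * \<phi> (lam i * (X i \<omega> - m))) \<in> borel_measurable M" by measurable
  qed
  have gpos: "0 \<le> 1 + b*(\<mu>-m) + b\<^sup>2*((\<mu>-m)\<^sup>2 + \<sigma>\<^sup>2)/2" for b
  proof -
    have "1 + b*(\<mu>-m) + b\<^sup>2*((\<mu>-m)\<^sup>2 + \<sigma>\<^sup>2)/2 = ((1 + b*(\<mu>-m))\<^sup>2 + 1 + b\<^sup>2*\<sigma>\<^sup>2)/2"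
      by (simp add: power2_eq_square field_simps)
    also have "\<dots> \<ge> 0" by (intro divide_nonneg_pos add_nonneg_nonneg) auto
    finally show ?thesis .
  qed
  have s2: "s\<^sup>2 = 1" using s by auto
  have "(\<Prod>i=1..t. (1 + (s * lam i)*(\<mu>-m) + (s * lam i)\<^sup>2*((\<mu>-m)\<^sup>2 + \<sigma>\<^sup>2)/2))
      \<le> (\<Prod>i=1..t. exp ((s * lam i)*(\<mu>-m) + (s * lam i)\<^sup>2*((\<mu>-m)\<^sup>2 + \<sigma>\<^sup>2)/2))"
    by (rule prod_mono) (use gpos exp_ge_add_one_self in \<open>auto simp: add.assoc\<close>)
  also have "\<dots> = exp (\<Sum>i=1..t. ((s * lam i)*(\<mu>-m) + (s * lam i)\<^sup>2*((\<mu>-m)\<^sup>2 + \<sigma>\<^sup>2)/2))"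
    by (simp add: exp_sum)
  also have "(\<Sum>i=1..t. ((s * lam i)*(\<mu>-m) + (s * lam i)\<^sup>2*((\<mu>-m)\<^sup>2 + \<sigma>\<^sup>2)/2))
      = (\<Sum>i=1..t. (s*d) * lam i + ((d\<^sup>2+\<sigma>\<^sup>2)/2) * (lam i)\<^sup>2)"
    by (rule sum.cong) (auto simp: d_def power_mult_distrib s2)
  also have "\<dots> = (s*d) * (\<Sum>i=1..t. lam i) + ((d\<^sup>2+\<sigma>\<^sup>2)/2) * (\<Sum>i=1..t. (lam i)\<^sup>2)"
    by (simp add: sum.distrib sum_distrib_left)
  also have "\<dots> = K" unfolding K_def by simp
  finally have pK: "(\<Prod>i=1..t. (1 + (s * lam i)*(\<mu>-m) + (s * lam i)\<^sup>2*((\<mu>-m)\<^sup>2 + \<sigma>\<^sup>2)/2)) \<le> exp K" .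
  have "emeasure M {\<omega>\<in>space M. R \<omega> \<ge> a} \<le>
      ennreal (exp (-1 * a)) * (\<integral>\<^sup>+x. ennreal (exp (1 * R x)) * indicator (space M) x \<partial>M)"
    by (rule Chernoff_ineq_nn_integral_ge) auto
  also have "(\<integral>\<^sup>+x. ennreal (exp (1 * R x)) * indicator (space M) x \<partial>M) = (\<integral>\<^sup>+x. ennreal (exp (R x)) \<partial>M)"
    by (rule nn_integral_cong) auto
  also have "\<dots> \<le> ennreal (exp K)"
    unfolding R_def using prod_bound[OF ps filt sub Xm Xi mu var cat s, where n=t and lam=lam and m=m] pK
    by (meson ennreal_leI order.trans)
  also have "ennreal (exp (-1 * a)) * ennreal (exp K) = ennreal (exp (K - a))"
    by (simp add: ennreal_mult[symmetric] exp_add[symmetric])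
  also have "exp (K - a) = \<epsilon>/2" unfolding a_def using eps by (simp add: exp_minus)
  finally show ?thesis unfolding R_def a_def K_def d_def by (simp add: mult_left_mono)
qed

theorem theorem4:
  fixes M :: "'a measure" and F :: "nat \<Rightarrow> 'a measure" and X :: "nat \<Rightarrow> 'a \<Rightarrow> real"
    and \<mu> \<sigma> \<alpha> \<epsilon> :: real and \<phi> :: "real \<Rightarrow> real" and lam :: "nat \<Rightarrow> real" and t :: nat
  assumes "prob_space M"
    and "filtration (space M) F"
    and "\<And>n. subalgebra M (F n)"
    and "sets (F 0) = {{}, space M}"
    and "\<And>n. n \<ge> 1 \<Longrightarrow> X n \<in> borel_measurable (F n)"
    and "\<And>n. n \<ge> 1 \<Longrightarrow> integrable M (X n)"
    and "\<And>n. n \<ge> 1 \<Longrightarrow> AE \<omega> in M. real_cond_exp M (F (n - 1)) (X n) \<omega> = \<mu>"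
    and "\<And>n. n \<ge> 1 \<Longrightarrow>
           AE \<omega> in M. nn_cond_exp M (F (n - 1)) (\<lambda>\<omega>. ennreal ((X n \<omega> - \<mu>)\<^sup>2)) \<omega> \<le> ennreal (\<sigma>\<^sup>2)"
    and "0 < \<alpha>" and "\<alpha> < 1"
    and "catoni_type \<phi>"
    and "\<And>n. n \<ge> 1 \<Longrightarrow> lam n > 0"
    and "0 < \<epsilon>" and "\<epsilon> < 1"
    and "t \<ge> 1"
    and "(\<Sum>i=1..t. lam i)\<^sup>2 - 2 * (\<Sum>i=1..t. (lam i)\<^sup>2) *
           (\<sigma>\<^sup>2 * (\<Sum>i=1..t. (lam i)\<^sup>2) + ln (2 / \<epsilon>) + ln (2 / \<alpha>)) \<ge> 0"
  shows "\<exists>E \<in> sets M. measure M E \<ge> 1 - \<epsilon> \<and>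
           (\<forall>\<omega> \<in> E. set_width (catoni_CI \<phi> lam \<sigma> \<alpha> X t \<omega>) \<le>
              4 * (\<sigma>\<^sup>2 * (\<Sum>i=1..t. (lam i)\<^sup>2) + ln (2 / \<epsilon>) + ln (2 / \<alpha>)) / (\<Sum>i=1..t. lam i))"
proof -
  note ps = assms(1) and filt = assms(2) and sub = assms(3) and Xm = assms(5) and Xi = assms(6)
    and mu = assms(7) and var = assms(8) and cat = assms(11) and lampos = assms(12)
  interpret prob_space M by fact
  define A where "A = (\<Sum>i=1..t. lam i)"
  define B where "B = (\<Sum>i=1..t. (lam i)\<^sup>2)"
  define c where "c = \<sigma>\<^sup>2 * B + ln (2 / \<epsilon>) + ln (2 / \<alpha>)"
  define r where "r = sqrt (A\<^sup>2 - 2 * B * c)"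
  define \<delta> where "\<delta> = (A - r) / B"
  have D: "A\<^sup>2 - 2 * B * c \<ge> 0" using assms(16) unfolding A_def B_def c_def by simp
  have r2: "r\<^sup>2 = A\<^sup>2 - 2 * B * c" unfolding r_def using D by simp
  have r0: "r \<ge> 0" unfolding r_def using D by simp
  have A0: "A > 0" unfolding A_def using lampos assms(15)
    by (intro sum_pos) auto
  have B0: "B > 0" unfolding B_def using lampos assms(15)
    by (intro sum_pos) (auto, metis less_irrefl)
  have c0: "c > 0"
  proof -
    have "ln (2/\<epsilon>) > 0" using assms(13,14) by simp
    moreover have "ln (2/\<alpha>) > 0" using assms(9,10) by simp
    moreover have "\<sigma>\<^sup>2 * B \<ge> 0" using B0 by simp
    ultimately show ?thesis unfolding c_def by linarith
  qed
  have q: "B * \<delta>\<^sup>2 / 2 - A * \<delta> + c = 0"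
  proof -
    have "B * \<delta> = A - r" unfolding \<delta>_def using B0 by simp
    have "2 * B * (B * \<delta>\<^sup>2 / 2 - A * \<delta> + c) = (B * \<delta>)\<^sup>2 - 2 * A * (B * \<delta>) + 2 * B * c"
      by (simp add: algebra_simps power2_eq_square)
    also have "\<dots> = (A-r)\<^sup>2 - 2*A*(A-r) + (A\<^sup>2 - r\<^sup>2)" using \<open>B * \<delta> = A - r\<close> r2 by simp
    also have "\<dots> = 0" by (simp add: power2_eq_square algebra_simps)
    finally show ?thesis using B0 by simp
  qed
  have dA: "\<delta> * (A + r) = 2 * c"
  proof -
    have "\<delta> * (A + r) = (A\<^sup>2 - r\<^sup>2) / B" unfolding \<delta>_def by (simp add: algebra_simps power2_eq_square)
    also have "\<dots> = 2 * c" using r2 B0 by simp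
    finally show ?thesis .
  qed
  have d0: "\<delta> \<ge> 0"
  proof -
    have "A + r > 0" using A0 r0 by simp
    then show ?thesis using dA c0 by (smt (verit) mult_nonpos_nonneg)
  qed
  have dle: "2 * \<delta> \<le> 4 * c / A"
  proof -
    have "\<delta> * A \<le> \<delta> * (A + r)" using d0 r0 by (simp add: mult_left_mono)
    then have "\<delta> * A \<le> 2 * c" using dA by simp
    then show ?thesis using A0 by (simp add: field_simps)
  qed
  have phim[measurable]: "\<phi> \<in> borel_measurable borel"
    using cat unfolding catoni_type_def by (auto intro: borel_measurable_mono)
  have Rm: "(\<lambda>\<omega>. (\<Sum>i=1..t. s * \<phi> (lam i * (X i \<omega> - m)))) \<in> borel_measurable M" for s m
  proof (rule borel_measurable_sum)
    fix i assume "i \<in> {1..t}"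
    then have [measurable]: "X i \<in> borel_measurable M" using measurable_from_subalg[OF sub Xm] by auto
    show "(\<lambda>\<omega>. s * \<phi> (lam i * (X i \<omega> - m))) \<in> borel_measurable M" by measurable
  qed
  define b1 where "b1 = {\<omega>\<in>space M. 1*(\<mu>-(\<mu>+\<delta>))*(\<Sum>i=1..t. lam i) + ((\<mu>-(\<mu>+\<delta>))\<^sup>2+\<sigma>\<^sup>2)*(\<Sum>i=1..t. (lam i)\<^sup>2)/2 + ln (2/\<epsilon>)
      \<le> (\<Sum>i=1..t. 1 * \<phi> (lam i * (X i \<omega> - (\<mu>+\<delta>))))}"
  define b2 where "b2 = {\<omega>\<in>space M. (-1)*(\<mu>-(\<mu>-\<delta>))*(\<Sum>i=1..t. lam i) + ((\<mu>-(\<mu>-\<delta>))\<^sup>2+\<sigma>\<^sup>2)*(\<Sum>i=1..t. (lam i)\<^sup>2)/2 + ln (2/\<epsilon>)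
      \<le> (\<Sum>i=1..t. (-1) * \<phi> (lam i * (X i \<omega> - (\<mu>-\<delta>))))}"
  have b1m: "b1 \<in> sets M" unfolding b1_def using Rm[of 1 "\<mu>+\<delta>"] by measurable
  have b2m: "b2 \<in> sets M" unfolding b2_def using Rm[of "-1" "\<mu>-\<delta>"] by measurable
  have e1: "emeasure M b1 \<le> ennreal (\<epsilon>/2)" unfolding b1_def
    by (rule tail_bound[OF ps filt sub Xm Xi mu var cat _ assms(13)]) auto
  have e2: "emeasure M b2 \<le> ennreal (\<epsilon>/2)" unfolding b2_def
    by (rule tail_bound[OF ps filt sub Xm Xi mu var cat _ assms(13)]) auto
  have m1: "measure M b1 \<le> \<epsilon>/2" using e1 assms(13) by (simp add: emeasure_eq_measure ennreal_le_iff)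
  have m2: "measure M b2 \<le> \<epsilon>/2" using e2 assms(13) by (simp add: emeasure_eq_measure ennreal_le_iff)
  define E where "E = space M - (b1 \<union> b2)"
  have Em: "E \<in> sets M" unfolding E_def using b1m b2m by auto
  have "measure M E = 1 - measure M (b1 \<union> b2)" unfolding E_def using b1m b2m by (simp add: prob_compl)
  moreover have "measure M (b1 \<union> b2) \<le> measure M b1 + measure M b2"
    using b1m b2m by (intro measure_subadditive) (auto simp: emeasure_eq_measure)
  ultimately have mE: "measure M E \<ge> 1 - \<epsilon>" using m1 m2 by linarith
  have lowb: "- (\<sigma>\<^sup>2 * B) / 2 - ln (2 / \<alpha>) = - \<delta> * A + (\<delta>\<^sup>2 + \<sigma>\<^sup>2) * B / 2 + ln (2/\<epsilon>)"
    using q unfolding c_def by (simp add: field_simps)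
  show ?thesis
  proof (intro bexI conjI ballI)
    show "E \<in> sets M" by (rule Em)
    show "1 - \<epsilon> \<le> measure M E" by (rule mE)
    fix \<omega> assume \<omega>: "\<omega> \<in> E"
    define S where "S = catoni_CI \<phi> lam \<sigma> \<alpha> X t \<omega>"
    have ub: "m < \<mu> + \<delta>" if "m \<in> S" for m
    proof (rule ccontr)
      assume "\<not> m < \<mu> + \<delta>"
      then have mm: "\<mu> + \<delta> \<le> m" by simp
      have "(\<Sum>i=1..t. \<phi> (lam i * (X i \<omega> - m))) \<le> (\<Sum>i=1..t. \<phi> (lam i * (X i \<omega> - (\<mu>+\<delta>))))"
      proof (rule sum_mono)
        fix i assume "i \<in> {1..t}"
        then have "lam i > 0" using lampos by auto
        then have "lam i * (X i \<omega> - m) \<le> lam i * (X i \<omega> - (\<mu>+\<delta>))" using mm by (simp add: mult_left_mono)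
        then show "\<phi> (lam i * (X i \<omega> - m)) \<le> \<phi> (lam i * (X i \<omega> - (\<mu>+\<delta>)))"
          using cat unfolding catoni_type_def mono_def by blast
      qed
      also have "\<dots> < - \<delta> * A + (\<delta>\<^sup>2 + \<sigma>\<^sup>2) * B / 2 + ln (2/\<epsilon>)"
        using \<omega> unfolding E_def b1_def A_def B_def by auto
      also have "\<dots> = - (\<sigma>\<^sup>2 * B) / 2 - ln (2 / \<alpha>)" using lowb by simp
      finally show False using that unfolding S_def catoni_CI_def B_def by auto
    qed
    have lb: "\<mu> - \<delta> < m" if "m \<in> S" for m
    proof (rule ccontr)
      assume "\<not> \<mu> - \<delta> < m"
      then have mm: "m \<le> \<mu> - \<delta>" by simp
      have "(\<Sum>i=1..t. \<phi> (lam i * (X i \<omega> - (\<mu>-\<delta>)))) \<le> (\<Sum>i=1..t. \<phi> (lam i * (X i \<omega> - m)))"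
      proof (rule sum_mono)
        fix i assume "i \<in> {1..t}"
        then have "lam i > 0" using lampos by auto
        then have "lam i * (X i \<omega> - (\<mu>-\<delta>)) \<le> lam i * (X i \<omega> - m)" using mm by (simp add: mult_left_mono)
        then show "\<phi> (lam i * (X i \<omega> - (\<mu>-\<delta>))) \<le> \<phi> (lam i * (X i \<omega> - m))"
          using cat unfolding catoni_type_def mono_def by blast
      qed
      moreover have "(\<Sum>i=1..t. (-1) * \<phi> (lam i * (X i \<omega> - (\<mu>-\<delta>)))) < - \<delta> * A + (\<delta>\<^sup>2 + \<sigma>\<^sup>2) * B / 2 + ln (2/\<epsilon>)"
        using \<omega> unfolding E_def b2_def A_def B_def by auto
      moreover have "(\<Sum>i=1..t. (-1) * \<phi> (lam i * (X i \<omega> - (\<mu>-\<delta>)))) = - (\<Sum>i=1..t. \<phi> (lam i * (X i \<omega> - (\<mu>-\<delta>))))"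
        by (simp add: sum_negf)
      ultimately have "(\<sigma>\<^sup>2 * B) / 2 + ln (2 / \<alpha>) < (\<Sum>i=1..t. \<phi> (lam i * (X i \<omega> - m)))"
        using lowb by linarith
      then show False using that unfolding S_def catoni_CI_def B_def by auto
    qed
    have "set_width S \<le> 4 * c / A"
    proof (cases "S = {}")
      case True
      then show ?thesis unfolding set_width_def using c0 A0 by simp
    next
      case False
      have "Sup S \<le> \<mu> + \<delta>" using False ub by (intro cSup_least) (auto intro: less_imp_le)
      moreover have "\<mu> - \<delta> \<le> Inf S" using False lb by (intro cInf_greatest) (auto intro: less_imp_le)
      ultimately show ?thesis unfolding set_width_def using False dle by simp
    qed
    then show "set_width (catoni_CI \<phi> lam \<sigma> \<alpha> X t \<omega>) \<le>
              4 * (\<sigma>\<^sup>2 * (\<Sum>i=1..t. (lam i)\<^sup>2) + ln (2 / \<epsilon>) + ln (2 / \<alpha>)) / (\<Sum>i=1..t. lam i)"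
      unfolding S_def c_def A_def B_def .
  qed
qed

end
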